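(* Let $S=\{a_1,\ldots,a_m\}$ be an alphabet of $m$ distinct letters and let $r_1,\ldots,r_m$ be nonnegative integers. For $k\ge0$ let $n_k$ denote the number of factorizations on $S$ with exactly $k$ parts such that each part is a Carlitz word and, for each $i$, the letter $a_i$ is used exactly $r_i$ times in total. Then \[ \prod_{i=1}^m l_{r_i}(x) = \sum_{k\ge 0} n_k\, l_k(x). \]
   Context: A word is a finite sequence of letters; it is Carlitz if no two adjacent letters are equal. A factorization on $S$ is an ordered list $(\phi_1)\cdots(\phi_k)$ of nonempty words on $S$, its parts. The polynomials $l_k$ are defined by $\sum_{k\ge0}l_k(x)z^k=e^{xz/(1+z)}$, i.e. $l_k(x)=(-1)^kL_k^{(-1)}(x)$ where $L_k^{(\alpha)}$ are the generalized Laguerre polynomials. *)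

theory Defs
  imports Complex_Main "HOL-Computational_Algebra.Formal_Power_Series"
begin

definition lpoly :: "nat \<Rightarrow> real \<Rightarrow> real" where
  "lpoly k x = fps_nth (fps_compose (fps_exp x) (fps_X / (1 + fps_X))) k"

definition carlitz :: "'a list \<Rightarrow> bool" where
  "carlitz w \<longleftrightarrow> (\<forall>i. Suc i < length w \<longrightarrow> w ! i \<noteq> w ! Suc i)"

definition carlitz_facts :: "'a set \<Rightarrow> (nat \<Rightarrow> 'a) \<Rightarrow> nat \<Rightarrow> (nat \<Rightarrow> nat) \<Rightarrow> nat \<Rightarrow> 'a list list set" where
  "carlitz_facts S a m r k = {F. length F = k \<and> (\<forall>w\<in>set F. w \<noteq> [] \<and> set w \<subseteq> S \<and> carlitz w)
      \<and> (\<forall>i<m. count_list (concat F) (a i) = r i)}"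

end

theory Submission
  imports Defs
begin
unbundle fps_syntax

lemma lpoly_0: "lpoly 0 x = 1"
  by (simp add: lpoly_def)

definition gX :: "real fps" where "gX = fps_X / (1 + fps_X)"

lemma gX_mult: "gX * (1 + fps_X) = fps_X"
  unfolding gX_def by (simp add: fps_divide_unit inverse_mult_eq_1 mult.assoc)

lemma gX_0: "gX $ 0 = 0"
  unfolding gX_def by (simp add: fps_divide_unit inverse_mult_eq_1 mult.assoc)

definition Fx :: "real \<Rightarrow> real fps" where "Fx x = fps_compose (fps_exp x) gX"

lemma Fx_nth: "Fx x $ k = lpoly k x" by (simp add: Fx_def lpoly_def gX_def)

lemma Fx_ode: "fps_deriv (Fx x) * (1 + fps_X)^2 = fps_const x * Fx x"
proof -
  have d: "fps_deriv gX * (1 + fps_X) + gX = 1"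
    using arg_cong[OF gX_mult, of fps_deriv] by (simp add: algebra_simps)
  have "fps_deriv (Fx x) = fps_const x * Fx x * fps_deriv gX"
    unfolding Fx_def by (simp add: fps_compose_deriv gX_0 fps_compose_mult_distrib)
  then have "fps_deriv (Fx x) * (1 + fps_X)^2 = fps_const x * Fx x * ((fps_deriv gX * (1 + fps_X)) * (1 + fps_X))"
    by (simp add: power2_eq_square algebra_simps)
  also have "fps_deriv gX * (1 + fps_X) = 1 - gX" using d by (simp add: algebra_simps)
  also have "(1 - gX) * (1 + fps_X) = 1" using gX_mult by (simp add: algebra_simps)
  finally show ?thesis by simp
qed

definition lift :: "real fps \<Rightarrow> real fps fps" where
  "lift h = Abs_fps (\<lambda>n. fps_const (h $ n))"

lemma lift_nth[simp]: "lift h $ n = fps_const (h $ n)" by (simp add: lift_def)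

lemma fps_const_sum': "fps_const (sum f A) = (\<Sum>i\<in>A. fps_const (f i))"
  by (induction A rule: infinite_finite_induct) (auto simp: fps_const_add[symmetric])

lemma lift_add: "lift (a + b) = lift a + lift b"
  by (simp add: fps_eq_iff)

lemma lift_mult: "lift (a * b) = lift a * lift b"
  by (simp add: fps_eq_iff fps_mult_nth fps_const_sum' fps_const_mult)

lemma lift_one: "lift 1 = 1" by (simp add: fps_eq_iff)
lemma lift_X: "lift fps_X = fps_X" by (simp add: fps_eq_iff fps_X_def)
lemma lift_const: "lift (fps_const c) = fps_const (fps_const c)" by (simp add: fps_eq_iff)
lemma lift_deriv: "lift (fps_deriv a) = fps_deriv (lift a)"
  by (simp add: fps_eq_iff fps_of_nat[symmetric] fps_const_mult)

definition LL :: "real \<Rightarrow> real fps fps" where "LL x = lift (Fx x)"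

lemma LL_ode: "fps_deriv (LL x) * (1 + fps_X)^2 = fps_const (fps_const x) * LL x"
proof -
  have "lift (fps_deriv (Fx x) * (1 + fps_X)^2) = lift (fps_const x * Fx x)"
    using Fx_ode by simp
  then show ?thesis
    by (simp add: LL_def lift_mult lift_add lift_one lift_X lift_const lift_deriv power2_eq_square)
qed

lemma LL_nth: "LL x $ k = fps_const (lpoly k x)" by (simp add: LL_def Fx_nth)


type_synonym rs = "real fps fps"

lemma ode_unique:
  fixes g h Q :: rs
  assumes "fps_deriv g = g * Q" "fps_deriv h = h * Q" "g $ 0 = h $ 0"
  shows "g = h"
proof -
  define e where "e = g - h"
  have de: "fps_deriv e = e * Q" using assms(1,2) by (simp add: e_def algebra_simps)
  have e0: "e $ 0 = 0" using assms(3) by (simp add: e_def)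
  have "\<forall>j\<le>n. e $ j = 0" for n
  proof (induction n)
    case 0 then show ?case using e0 by simp
  next
    case (Suc n)
    have "fps_deriv e $ n = (e * Q) $ n" using de by simp
    also have "\<dots> = 0" using Suc.IH by (simp add: fps_mult_nth)
    finally have "of_nat (n+1) * e $ (n+1) = 0" by simp
    moreover have "(of_nat (n+1) :: real fps) \<noteq> 0"
      by (metis fps_of_nat fps_const_eq_0_iff of_nat_eq_0_iff add_eq_0_iff_both_eq_0 one_neq_zero)
    ultimately have "e $ Suc n = 0" by simp
    then show ?case using Suc.IH le_Suc_eq by auto
  qed
  then have "e = 0" by (metis fps_ext fps_zero_nth order_refl)
  then show ?thesis by (simp add: e_def)
qed

lemma compose_1X_sq:
  fixes c :: rs
  assumes "c $ 0 = 0"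
  shows "(1 + fps_X)^2 oo c = (1 + c)^2"
proof -
  have "(1 + fps_X) oo c = 1 + c"
    using assms by (simp add: fps_compose_add_distrib)
  then show ?thesis using fps_compose_power[OF assms, of "1 + fps_X" 2] by simp
qed

lemma LL_compose_ode:
  fixes c :: rs
  assumes c0: "c $ 0 = 0"
  shows "fps_deriv (LL x oo c) * (1 + c)^2 = fps_const (fps_const x) * (LL x oo c) * fps_deriv c"
proof -
  have "(fps_deriv (LL x) oo c) * (1 + c)^2 = (fps_deriv (LL x) * (1 + fps_X)^2) oo c"
    using c0 by (simp add: fps_compose_mult_distrib compose_1X_sq)
  also have "\<dots> = fps_const (fps_const x) * (LL x oo c)"
    using c0 by (simp add: LL_ode fps_compose_mult_distrib)
  finally have *: "(fps_deriv (LL x) oo c) * (1 + c)^2 = fps_const (fps_const x) * (LL x oo c)" .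
  show ?thesis
    using c0 * by (simp add: fps_compose_deriv algebra_simps)
qed

lemma LL_0: "(LL x oo c) $ 0 = 1"
  by (simp add: LL_nth lpoly_0)

lemma G_ode:
  fixes C U :: rs
  assumes c0: "C $ 0 = 0" and dC: "fps_deriv C = fps_deriv U * (1 + C)^2"
  shows "fps_deriv (LL x oo C) = (LL x oo C) * (fps_const (fps_const x) * fps_deriv U)"
proof -
  have "fps_deriv (LL x oo C) = (fps_deriv (LL x) oo C) * fps_deriv C"
    using c0 by (simp add: fps_compose_deriv)
  also have "\<dots> = ((fps_deriv (LL x) oo C) * (1 + C)^2) * fps_deriv U"
    using dC by (simp add: algebra_simps)
  also have "(fps_deriv (LL x) oo C) * (1 + C)^2 = (fps_deriv (LL x) * (1 + fps_X)^2) oo C"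
    using c0 by (simp add: fps_compose_mult_distrib compose_1X_sq)
  also have "\<dots> = fps_const (fps_const x) * (LL x oo C)"
    using c0 by (simp add: LL_ode fps_compose_mult_distrib)
  finally show ?thesis by (simp add: algebra_simps)
qed

lemma prod_ode:
  fixes f u :: "nat \<Rightarrow> rs" and Q :: rs
  assumes "finite I" "\<And>i. i \<in> I \<Longrightarrow> fps_deriv (f i) = f i * (Q * fps_deriv (u i))"
  shows "fps_deriv (prod f I) = prod f I * (Q * fps_deriv (sum u I))"
  using assms
proof (induction I rule: finite_induct)
  case empty then show ?case by simp
next
  case (insert j I)
  then show ?case by (simp add: algebra_simps fps_deriv_sum)
qed

lemma single_ode:
  fixes v u :: rs
  assumes "u * (1 + v * fps_X) = v * fps_X" "v = fps_const w"
  shows "fps_deriv (LL x oo (v * fps_X)) = (LL x oo (v * fps_X)) * (fps_const (fps_const x) * fps_deriv u)"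
proof -
  have vX0: "(v * fps_X) $ 0 = 0" using assms(2) by simp
  have dvX: "fps_deriv (v * fps_X) = v" using assms(2) by simp
  have A: "fps_deriv (LL x oo (v * fps_X)) * (1 + v * fps_X)^2 = fps_const (fps_const x) * (LL x oo (v * fps_X)) * v"
    using LL_compose_ode[OF vX0, of x] dvX by simp
  have d1: "fps_deriv u * (1 + v * fps_X) + u * v = v"
    using arg_cong[OF assms(1), of fps_deriv] assms(2) by (simp add: algebra_simps)
  have B: "fps_deriv u * (1 + v * fps_X)^2 = v"
  proof -
    have d2: "fps_deriv u * (1 + v * fps_X) = v - u * v" using d1 by (metis add_diff_cancel_right')
    have "fps_deriv u * (1 + v * fps_X)^2 = (fps_deriv u * (1 + v * fps_X)) * (1 + v * fps_X)"
      by (simp add: power2_eq_square algebra_simps)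
    also have "\<dots> = (v - u * v) * (1 + v * fps_X)" by (simp only: d2)
    also have "\<dots> = v + v * (v * fps_X) - v * (u * (1 + v * fps_X))" by (simp add: algebra_simps)
    also have "\<dots> = v" using assms(1) by (simp add: algebra_simps)
    finally show ?thesis .
  qed
  have nz: "(1 + v * fps_X)^2 \<noteq> (0::rs)"
  proof -
    have "(1 + v * fps_X) $ 0 = 1" using assms(2) by simp
    then have "1 + v * fps_X \<noteq> 0" by (metis fps_zero_nth zero_neq_one)
    then show ?thesis by simp
  qed
  have "(fps_deriv (LL x oo (v * fps_X)) - (LL x oo (v * fps_X)) * (fps_const (fps_const x) * fps_deriv u)) * (1 + v * fps_X)^2 = 0"
    using A B by (simp add: algebra_simps)
  then show ?thesis using nz by simp
qed


lemma carlitz_snoc: "carlitz (v @ [c]) \<longleftrightarrow> carlitz v \<and> (v = [] \<or> last v \<noteq> c)"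
proof (cases v rule: rev_cases)
  case Nil then show ?thesis by (simp add: carlitz_def)
next
  case (snoc w d)
  show ?thesis
    unfolding carlitz_def snoc
    by (auto simp: nth_append less_Suc_eq)
qed

locale cf =
  fixes a :: "nat \<Rightarrow> 'a" and m B :: nat
  assumes inj: "inj_on a {..<m}"
begin

abbreviation "S \<equiv> a ` {..<m}"

definition idx :: "'a \<Rightarrow> nat" where "idx c = inv_into {..<m} a c"

lemma idx_a[simp]: "i < m \<Longrightarrow> idx (a i) = i"
  using inj by (simp add: idx_def)

lemma idx_lt: "c \<in> S \<Longrightarrow> idx c < m"
  unfolding idx_def using inv_into_into[of c a "{..<m}"] by auto

lemma a_idx: "c \<in> S \<Longrightarrow> a (idx c) = c"
  by (simp add: idx_def f_inv_into_f)

definition wt :: "'a list \<Rightarrow> nat" where "wt w = sum_list (map (\<lambda>c. B ^ idx c) w)"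

lemma wt_simps[simp]: "wt [] = 0" "wt (c # w) = B ^ idx c + wt w" "wt (v @ w) = wt v + wt w"
  by (simp_all add: wt_def)

definition Carl :: "nat \<Rightarrow> 'a list set" where
  "Carl n = {w. length w = n \<and> w \<noteq> [] \<and> set w \<subseteq> S \<and> carlitz w}"

lemma finite_Carl: "finite (Carl n)"
proof -
  have "Carl n \<subseteq> {w. set w \<subseteq> S \<and> length w = n}" by (auto simp: Carl_def)
  then show ?thesis using finite_lists_length_eq[of S n] by (auto intro: finite_subset)
qed

lemma Carl_0: "Carl 0 = {}" by (auto simp: Carl_def)

definition Cser :: rs where "Cser = Abs_fps (\<lambda>n. \<Sum>w\<in>Carl n. fps_X ^ wt w)"

definition Ci :: "nat \<Rightarrow> rs" where
  "Ci i = Abs_fps (\<lambda>n. \<Sum>w\<in>{w\<in>Carl n. last w = a i}. fps_X ^ wt w)"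

definition yv :: "nat \<Rightarrow> rs" where "yv i = fps_const (fps_X ^ (B ^ i))"

definition inv1 :: "nat \<Rightarrow> rs" where "inv1 i = Abs_fps (\<lambda>n. (- (fps_X ^ (B ^ i))) ^ n)"

definition u :: "nat \<Rightarrow> rs" where "u i = yv i * fps_X * inv1 i"

definition U :: rs where "U = (\<Sum>i<m. u i)"

lemma Cser_0: "Cser $ 0 = 0" by (simp add: Cser_def Carl_0)
lemma Ci_0: "Ci i $ 0 = 0" by (simp add: Ci_def Carl_0)

lemma inv1_mult: "(1 + yv i * fps_X) * inv1 i = 1"
proof (rule fps_ext)
  fix n
  show "((1 + yv i * fps_X) * inv1 i) $ n = 1 $ n"
  proof (cases n)
    case 0 then show ?thesis by (simp add: inv1_def yv_def)
  next
    case (Suc k)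
    have "((1 + yv i * fps_X) * inv1 i) = inv1 i + fps_X * (yv i * inv1 i)" by (simp add: algebra_simps)
    then show ?thesis using Suc by (simp add: inv1_def yv_def)
  qed
qed

lemma u_mult: "u i * (1 + yv i * fps_X) = yv i * fps_X"
proof -
  have "u i * (1 + yv i * fps_X) = yv i * fps_X * ((1 + yv i * fps_X) * inv1 i)"
    by (simp add: u_def algebra_simps)
  then show ?thesis by (simp add: inv1_mult)
qed

lemma Ci_Suc:
  assumes i: "i < m"
  shows "Ci i $ Suc n = fps_X ^ (B ^ i) * ((if n = 0 then 1 else 0) + Cser $ n - Ci i $ n)"
proof -
  define V where "V = {v. length v = n \<and> set v \<subseteq> S \<and> carlitz v \<and> (v = [] \<or> last v \<noteq> a i)}"
  have img: "{w\<in>Carl (Suc n). last w = a i} = (\<lambda>v. v @ [a i]) ` V"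
  proof (intro set_eqI iffI)
    fix w assume "w \<in> {w\<in>Carl (Suc n). last w = a i}"
    then have w: "length w = Suc n" "w \<noteq> []" "set w \<subseteq> S" "carlitz w" "last w = a i"
      by (auto simp: Carl_def)
    then obtain v where v: "w = v @ [a i]" by (metis append_butlast_last_id)
    then show "w \<in> (\<lambda>v. v @ [a i]) ` V" using w by (auto simp: V_def carlitz_snoc)
  next
    fix w assume "w \<in> (\<lambda>v. v @ [a i]) ` V"
    then obtain v where "v \<in> V" "w = v @ [a i]" by auto
    then show "w \<in> {w\<in>Carl (Suc n). last w = a i}" using i by (auto simp: V_def Carl_def carlitz_snoc)
  qed
  have "Ci i $ Suc n = (\<Sum>v\<in>V. fps_X ^ wt (v @ [a i]))"
    unfolding Ci_def fps_nth_Abs_fps img by (subst sum.reindex) (auto intro: inj_onI)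
  also have "\<dots> = fps_X ^ (B ^ i) * (\<Sum>v\<in>V. fps_X ^ wt v)"
    using i by (simp add: sum_distrib_left power_add algebra_simps)
  also have "(\<Sum>v\<in>V. fps_X ^ wt v) = (if n = 0 then 1 else 0) + Cser $ n - Ci i $ n"
  proof (cases "n = 0")
    case True
    then have "V = {[]}" by (auto simp: V_def carlitz_def)
    then show ?thesis using True by (simp add: Cser_def Ci_def Carl_0)
  next
    case False
    then have V: "V = Carl n - {w\<in>Carl n. last w = a i}" by (auto simp: V_def Carl_def)
    have "(\<Sum>v\<in>V. fps_X ^ wt v :: real fps) = (\<Sum>v\<in>Carl n. fps_X ^ wt v) - (\<Sum>v\<in>{w\<in>Carl n. last w = a i}. fps_X ^ wt v)"
      unfolding V using finite_Carl[of n] sum.subset_diff[of "{w\<in>Carl n. last w = a i}" "Carl n" "\<lambda>v. fps_X ^ wt v :: real fps"]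
      by (auto simp: algebra_simps)
    then show ?thesis using False by (simp add: Cser_def Ci_def)
  qed
  finally show ?thesis .
qed

lemma Ci_eq: "i < m \<Longrightarrow> Ci i = yv i * fps_X * (1 + Cser - Ci i)"
proof (rule fps_ext)
  fix n assume i: "i < m"
  show "Ci i $ n = (yv i * fps_X * (1 + Cser - Ci i)) $ n"
  proof (cases n)
    case 0 then show ?thesis by (simp add: Ci_0)
  next
    case (Suc k)
    have "(yv i * fps_X * (1 + Cser - Ci i)) $ n = (fps_X * (yv i * (1 + Cser - Ci i))) $ n" by (simp add: algebra_simps)
    also have "\<dots> = fps_X ^ (B ^ i) * ((1 + Cser - Ci i) $ k)" using Suc by (simp add: fps_X_mult_nth yv_def)
    finally show ?thesis using Suc Ci_Suc[OF i, of k] by simp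
  qed
qed

lemma Cser_sum: "Cser = (\<Sum>i<m. Ci i)"
proof (rule fps_ext)
  fix n
  have "(\<Sum>i<m. Ci i) $ n = (\<Sum>i<m. \<Sum>w\<in>{w\<in>Carl n. idx (last w) = i}. fps_X ^ wt w)"
  proof -
    have "\<And>i. i < m \<Longrightarrow> {w\<in>Carl n. last w = a i} = {w\<in>Carl n. idx (last w) = i}"
      by (auto simp: Carl_def a_idx) (metis a_idx last_in_set subsetD)
    then show ?thesis by (simp add: fps_sum_nth Ci_def)
  qed
  also have "\<dots> = (\<Sum>w\<in>Carl n. fps_X ^ wt w)"
    using finite_Carl[of n] by (intro sum.group) (auto simp: Carl_def intro!: idx_lt)
  finally show "Cser $ n = (\<Sum>i<m. Ci i) $ n" by (simp add: Cser_def)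
qed

lemma Ci_u: "i < m \<Longrightarrow> Ci i = u i * (1 + Cser)"
proof -
  assume i: "i < m"
  have e: "Ci i * (1 + yv i * fps_X) = yv i * fps_X * (1 + Cser)"
  proof -
    have "Ci i * (1 + yv i * fps_X) = Ci i + yv i * fps_X * Ci i" by (simp add: algebra_simps)
    also have "\<dots> = yv i * fps_X * (1 + Cser - Ci i) + yv i * fps_X * Ci i" using Ci_eq[OF i] by simp
    also have "\<dots> = yv i * fps_X * (1 + Cser)" by (simp add: algebra_simps)
    finally show ?thesis .
  qed
  have "Ci i = Ci i * ((1 + yv i * fps_X) * inv1 i)" by (simp add: inv1_mult)
  also have "\<dots> = (Ci i * (1 + yv i * fps_X)) * inv1 i" by (simp add: mult.assoc)
  also have "\<dots> = u i * (1 + Cser)" unfolding e u_def by (simp add: algebra_simps)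
  finally show ?thesis .
qed

lemma Cser_U: "Cser = U * (1 + Cser)"
  unfolding U_def sum_distrib_right by (subst Cser_sum) (simp add: Ci_u)

lemma U_0: "U $ 0 = 0" by (simp add: U_def u_def fps_sum_nth)

lemma Cser_deriv: "fps_deriv Cser = fps_deriv U * (1 + Cser)^2"
proof -
  have d: "fps_deriv Cser = fps_deriv U * (1 + Cser) + U * fps_deriv Cser"
    using arg_cong[OF Cser_U, of fps_deriv] by (simp add: algebra_simps)
  have inv: "(1 + Cser) * (1 - U) = 1"
  proof -
    have "(1 + Cser) * (1 - U) = 1 + Cser - U * (1 + Cser)" by (simp add: algebra_simps)
    also have "\<dots> = 1" using Cser_U by simp
    finally show ?thesis .
  qed
  have d2: "fps_deriv Cser * (1 - U) = fps_deriv U * (1 + Cser)"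
  proof -
    have "fps_deriv Cser * (1 - U) = fps_deriv Cser - U * fps_deriv Cser" by (simp add: algebra_simps)
    also have "\<dots> = fps_deriv U * (1 + Cser)" using d by (simp add: algebra_simps)
    finally show ?thesis .
  qed
  have "fps_deriv Cser = fps_deriv Cser * ((1 + Cser) * (1 - U))" by (simp add: inv)
  also have "\<dots> = (fps_deriv Cser * (1 - U)) * (1 + Cser)" by (simp add: algebra_simps)
  also have "\<dots> = fps_deriv U * (1 + Cser)^2" unfolding d2 by (simp add: power2_eq_square algebra_simps)
  finally show ?thesis .
qed

end

lemma prod_nth0: "(prod (f :: nat \<Rightarrow> rs) I) $ 0 = (\<Prod>i\<in>I. f i $ 0)"
  by (induction I rule: infinite_finite_induct) auto

context cf begin

lemma main_eq: "LL x oo Cser = (\<Prod>i<m. LL x oo (yv i * fps_X))"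
proof (rule ode_unique[where Q = "fps_const (fps_const x) * fps_deriv U"])
  show "fps_deriv (LL x oo Cser) = (LL x oo Cser) * (fps_const (fps_const x) * fps_deriv U)"
    by (rule G_ode[OF Cser_0 Cser_deriv])
  have "fps_deriv (\<Prod>i<m. LL x oo (yv i * fps_X)) = (\<Prod>i<m. LL x oo (yv i * fps_X)) * (fps_const (fps_const x) * fps_deriv (\<Sum>i<m. u i))"
    by (rule prod_ode) (auto intro: single_ode[OF u_mult yv_def])
  then show "fps_deriv (\<Prod>i<m. LL x oo (yv i * fps_X)) = (\<Prod>i<m. LL x oo (yv i * fps_X)) * (fps_const (fps_const x) * fps_deriv U)"
    by (simp add: U_def)
  show "(LL x oo Cser) $ 0 = (\<Prod>i<m. LL x oo (yv i * fps_X)) $ 0"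
    by (simp add: prod_nth0 LL_nth lpoly_0)
qed

definition Fk :: "nat \<Rightarrow> nat \<Rightarrow> 'a list list set" where
  "Fk k n = {F. length F = k \<and> (\<forall>w\<in>set F. w \<noteq> [] \<and> set w \<subseteq> S \<and> carlitz w) \<and> length (concat F) = n}"

lemma finite_Fk: "finite (Fk k n)"
proof -
  let ?W = "{w. set w \<subseteq> S \<and> length w \<le> n}"
  have fW: "finite ?W" by (rule finite_lists_length_le) auto
  have "Fk k n \<subseteq> {F. set F \<subseteq> ?W \<and> length F = k}"
  proof
    fix F assume F: "F \<in> Fk k n"
    have "\<And>w. w \<in> set F \<Longrightarrow> length w \<le> n"
    proof -
      fix w assume "w \<in> set F"
      then have "length w \<le> length (concat F)"
        by (induction F) auto
      then show "length w \<le> n" using F by (simp add: Fk_def)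
    qed
    then show "F \<in> {F. set F \<subseteq> ?W \<and> length F = k}" using F by (auto simp: Fk_def)
  qed
  then show ?thesis using finite_lists_length_eq[OF fW, of k] by (auto intro: finite_subset)
qed

lemma Fk_0: "Fk 0 n = (if n = 0 then {[]} else {})" by (auto simp: Fk_def)

lemma Fk_Suc: "Fk (Suc k) n = (\<lambda>(w, F). w # F) ` (SIGMA w:{w. w \<noteq> [] \<and> set w \<subseteq> S \<and> carlitz w \<and> length w \<le> n}. Fk k (n - length w))"
proof (intro set_eqI iffI)
  fix G assume "G \<in> Fk (Suc k) n"
  then obtain w F where "G = w # F" "length F = k" "w \<noteq> [] \<and> set w \<subseteq> S \<and> carlitz w"
     "\<forall>w\<in>set F. w \<noteq> [] \<and> set w \<subseteq> S \<and> carlitz w" "length w + length (concat F) = n"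
    by (cases G) (auto simp: Fk_def)
  then show "G \<in> (\<lambda>(w, F). w # F) ` (SIGMA w:{w. w \<noteq> [] \<and> set w \<subseteq> S \<and> carlitz w \<and> length w \<le> n}. Fk k (n - length w))"
    by (auto simp: Fk_def intro!: image_eqI[where x = "(w, F)"])
next
  fix G assume "G \<in> (\<lambda>(w, F). w # F) ` (SIGMA w:{w. w \<noteq> [] \<and> set w \<subseteq> S \<and> carlitz w \<and> length w \<le> n}. Fk k (n - length w))"
  then obtain p where p: "p \<in> (SIGMA w:{w. w \<noteq> [] \<and> set w \<subseteq> S \<and> carlitz w \<and> length w \<le> n}. Fk k (n - length w))"
     "G = (\<lambda>(w, F). w # F) p" by (rule imageE)
  obtain w F where "p = (w, F)" by (cases p)
  with p have wF: "G = w # F" "w \<noteq> [] \<and> set w \<subseteq> S \<and> carlitz w \<and> length w \<le> n" "F \<in> Fk k (n - length w)"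
    by auto
  then show "G \<in> Fk (Suc k) n" unfolding Fk_def by simp
qed

lemma Cser_pow: "Cser ^ k $ n = (\<Sum>F\<in>Fk k n. fps_X ^ wt (concat F))"
proof (induction k arbitrary: n)
  case 0 then show ?case by (simp add: Fk_0)
next
  case (Suc k)
  let ?W = "{w. w \<noteq> [] \<and> set w \<subseteq> S \<and> carlitz w \<and> length w \<le> n}"
  have fW: "finite ?W"
    by (rule finite_subset[OF _ finite_lists_length_le[of S n]]) auto
  have "Cser ^ Suc k $ n = (\<Sum>i=0..n. Cser $ i * Cser ^ k $ (n - i))"
    by (simp add: fps_mult_nth)
  also have "\<dots> = (\<Sum>i=0..n. \<Sum>w\<in>Carl i. fps_X ^ wt w * Cser ^ k $ (n - length w))"
    by (simp add: Cser_def sum_distrib_right Carl_def)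
  also have "\<dots> = (\<Sum>i=0..n. \<Sum>w\<in>{w\<in>?W. length w = i}. fps_X ^ wt w * Cser ^ k $ (n - length w))"
    by (intro sum.cong refl) (auto simp: Carl_def)
  also have "\<dots> = (\<Sum>w\<in>?W. fps_X ^ wt w * Cser ^ k $ (n - length w))"
    using fW by (intro sum.group) auto
  also have "\<dots> = (\<Sum>w\<in>?W. \<Sum>F\<in>Fk k (n - length w). fps_X ^ wt (concat (w # F)))"
    by (simp add: Suc.IH sum_distrib_left power_add)
  also have "\<dots> = (\<Sum>p\<in>(SIGMA w:?W. Fk k (n - length w)). fps_X ^ wt (concat (fst p # snd p)))"
    using fW finite_Fk by (subst sum.Sigma) (auto simp: case_prod_beta)
  also have "\<dots> = (\<Sum>G\<in>Fk (Suc k) n. fps_X ^ wt (concat G))"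
    unfolding Fk_Suc by (subst sum.reindex) (auto simp: inj_on_def case_prod_beta)
  finally show ?case .
qed

end

definition vecs :: "nat \<Rightarrow> nat \<Rightarrow> (nat \<Rightarrow> nat) set" where
  "vecs j n = {s. (\<forall>i\<ge>j. s i = 0) \<and> (\<Sum>i<j. s i) = n}"

lemma finite_vecs: "finite (vecs j n)"
proof -
  have "vecs j n \<subseteq> (\<lambda>xs i. if i < j then xs ! i else 0) ` {xs. set xs \<subseteq> {..n} \<and> length xs = j}"
  proof
    fix s assume s: "s \<in> vecs j n"
    have le: "\<And>i. i < j \<Longrightarrow> s i \<le> n"
      using s unfolding vecs_def by (metis (mono_tags, lifting) finite_lessThan lessThan_iff member_le_sum zero_le mem_Collect_eq)
    have "s = (\<lambda>i. if i < j then map s [0..<j] ! i else 0)"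
      using s by (auto simp: vecs_def fun_eq_iff)
    moreover have "map s [0..<j] \<in> {xs. set xs \<subseteq> {..n} \<and> length xs = j}" using le by auto
    ultimately show "s \<in> (\<lambda>xs i. if i < j then xs ! i else 0) ` {xs. set xs \<subseteq> {..n} \<and> length xs = j}"
      by blast
  qed
  then show ?thesis
    by (rule finite_subset) (intro finite_imageI finite_lists_length_eq, simp)
qed

lemma vecs_0: "vecs 0 n = (if n = 0 then {\<lambda>_. 0} else {})"
  by (auto simp: vecs_def)

lemma base_sum_lt:
  fixes s :: "nat \<Rightarrow> nat"
  assumes "\<forall>i<j. s i < B"
  shows "(\<Sum>i<j. s i * B ^ i) < B ^ j"
  using assms
proof (induction j)
  case 0 then show ?case by simp
next
  case (Suc j)
  have "(\<Sum>i<Suc j. s i * B ^ i) = (\<Sum>i<j. s i * B ^ i) + s j * B ^ j" by simp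
  also have "\<dots> < B ^ j + s j * B ^ j" using Suc by simp
  also have "\<dots> = (s j + 1) * B ^ j" by simp
  also have "\<dots> \<le> B * B ^ j" using Suc.prems by (intro mult_right_mono) auto
  finally show ?case by simp
qed

lemma base_unique:
  fixes s t :: "nat \<Rightarrow> nat"
  assumes "\<forall>i<j. s i < B" "\<forall>i<j. t i < B" "(\<Sum>i<j. s i * B ^ i) = (\<Sum>i<j. t i * B ^ i)"
  shows "\<forall>i<j. s i = t i"
  using assms
proof (induction j)
  case 0 then show ?case by simp
next
  case (Suc j)
  let ?A = "\<Sum>i<j. s i * B ^ i" and ?A' = "\<Sum>i<j. t i * B ^ i"
  have lt: "?A < B ^ j" "?A' < B ^ j" using Suc.prems by (auto intro: base_sum_lt)
  have eq: "?A + s j * B ^ j = ?A' + t j * B ^ j" using Suc.prems(3) by simp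
  have "(?A + s j * B ^ j) mod B ^ j = ?A" using lt by simp
  moreover have "(?A' + t j * B ^ j) mod B ^ j = ?A'" using lt by simp
  ultimately have AA: "?A = ?A'" using eq by simp
  then have "s j * B ^ j = t j * B ^ j" using eq by simp
  moreover have "B > 0" using Suc.prems(1) by auto
  ultimately have "s j = t j" by simp
  moreover have "\<forall>i<j. s i = t i" using Suc.IH Suc.prems AA by auto
  ultimately show ?case using less_Suc_eq by auto
qed

context cf begin

lemma f_nth: "(LL x oo (yv i * fps_X)) $ n = fps_X ^ (B ^ i * n) * fps_const (lpoly n x)"
  by (simp add: yv_def LL_nth power_mult)

lemma vecs_Suc_img:
  assumes q: "q \<le> n"
  shows "{s' \<in> vecs (Suc j) n. n - s' j = q} = (\<lambda>s. s(j := n - q)) ` vecs j q"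
proof (intro set_eqI iffI)
  fix s' assume s': "s' \<in> {s' \<in> vecs (Suc j) n. n - s' j = q}"
  have sj: "s' j \<le> n" using s' by (auto simp: vecs_def)
  then have sjq: "s' j = n - q" using s' q by auto
  have "s'(j := 0) \<in> vecs j q"
    using s' sj by (auto simp: vecs_def)
  moreover have "s' = (s'(j := 0))(j := n - q)" using sjq by auto
  ultimately show "s' \<in> (\<lambda>s. s(j := n - q)) ` vecs j q" by blast
next
  fix s' assume "s' \<in> (\<lambda>s. s(j := n - q)) ` vecs j q"
  then obtain s where s: "s \<in> vecs j q" "s' = s(j := n - q)" by auto
  have "(\<Sum>i<j. s' i) = q" using s by (auto simp: vecs_def)
  then show "s' \<in> {s' \<in> vecs (Suc j) n. n - s' j = q}" using s q by (auto simp: vecs_def)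
qed

lemma prod_nth:
  "(\<Prod>i<j. LL x oo (yv i * fps_X)) $ n =
     (\<Sum>s\<in>vecs j n. fps_X ^ (\<Sum>i<j. s i * B ^ i) * fps_const (\<Prod>i<j. lpoly (s i) x))"
proof (induction j arbitrary: n)
  case 0 then show ?case by (simp add: vecs_0 lpoly_0)
next
  case (Suc j)
  let ?h = "\<lambda>s. fps_X ^ (\<Sum>i<Suc j. s i * B ^ i) * fps_const (\<Prod>i<Suc j. lpoly (s i) x)"
  have "(\<Prod>i<Suc j. LL x oo (yv i * fps_X)) $ n = (\<Sum>q=0..n. (\<Prod>i<j. LL x oo (yv i * fps_X)) $ q * (LL x oo (yv j * fps_X)) $ (n - q))"
    by (simp add: fps_mult_nth)
  also have "\<dots> = (\<Sum>q=0..n. \<Sum>s\<in>vecs j q. ?h (s(j := n - q)))"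
  proof (rule sum.cong[OF refl])
    fix q assume "q \<in> {0..n}"
    have h: "?h (s(j := n - q)) = fps_X ^ (\<Sum>i<j. s i * B ^ i) * fps_const (\<Prod>i<j. lpoly (s i) x) *
         (fps_X ^ (B ^ j * (n - q)) * fps_const (lpoly (n - q) x))" for s
    proof -
      have e1: "(\<Sum>i<Suc j. (s(j := n - q)) i * B ^ i) = (\<Sum>i<j. s i * B ^ i) + B ^ j * (n - q)"
      proof -
        have "(\<Sum>i<j. (s(j := n - q)) i * B ^ i) = (\<Sum>i<j. s i * B ^ i)" by (intro sum.cong) auto
        then show ?thesis by simp
      qed
      have e2: "(\<Prod>i<Suc j. lpoly ((s(j := n - q)) i) x) = (\<Prod>i<j. lpoly (s i) x) * lpoly (n - q) x"
      proof -
        have "(\<Prod>i<j. lpoly ((s(j := n - q)) i) x) = (\<Prod>i<j. lpoly (s i) x)" by (intro prod.cong) auto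
        then show ?thesis by simp
      qed
      show ?thesis by (simp only: e1 e2 power_add fps_const_mult[symmetric]) (simp only: ac_simps)
    qed
    show "(\<Prod>i<j. LL x oo (yv i * fps_X)) $ q * (LL x oo (yv j * fps_X)) $ (n - q) = (\<Sum>s\<in>vecs j q. ?h (s(j := n - q)))"
      unfolding h Suc.IH f_nth by (simp add: sum_distrib_right)
  qed
  also have "\<dots> = (\<Sum>q=0..n. \<Sum>s'\<in>{s' \<in> vecs (Suc j) n. n - s' j = q}. ?h s')"
  proof (rule sum.cong[OF refl])
    fix q assume q: "q \<in> {0..n}"
    have inj: "inj_on (\<lambda>s. s(j := n - q)) (vecs j q)"
    proof (rule inj_onI)
      fix s t assume st: "s \<in> vecs j q" "t \<in> vecs j q" and eq: "s(j := n - q) = t(j := n - q)"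
      show "s = t"
      proof
        fix i
        from eq have "(s(j := n - q)) i = (t(j := n - q)) i" by simp
        then show "s i = t i" using st by (cases "i = j") (auto simp: vecs_def)
      qed
    qed
    show "(\<Sum>s\<in>vecs j q. ?h (s(j := n - q))) = (\<Sum>s'\<in>{s' \<in> vecs (Suc j) n. n - s' j = q}. ?h s')"
      using q by (simp add: vecs_Suc_img sum.reindex[OF inj])
  qed
  also have "\<dots> = (\<Sum>s'\<in>vecs (Suc j) n. ?h s')"
    by (rule sum.group) (auto simp: finite_vecs)
  finally show ?case .
qed

end

context cf begin

lemma sum_if_idx:
  assumes c: "c \<in> S"
  shows "(\<Sum>i<m. if c = a i then f i else 0) = (f (idx c) :: nat)"
proof -
  have "(\<Sum>i<m. if c = a i then f i else 0) = (\<Sum>i<m. if idx c = i then f i else 0)"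
    using c by (intro sum.cong refl) (auto simp: a_idx)
  also have "\<dots> = f (idx c)" using idx_lt[OF c] by simp
  finally show ?thesis .
qed

lemma count_cons: "count_list (c # w) y = count_list w y + (if c = y then 1 else 0)"
  by simp

lemma wt_count: "set w \<subseteq> S \<Longrightarrow> wt w = (\<Sum>i<m. count_list w (a i) * B ^ i)"
proof (induction w)
  case Nil then show ?case by simp
next
  case (Cons c w)
  have c: "c \<in> S" using Cons.prems by simp
  have "(\<Sum>i<m. count_list (c # w) (a i) * B ^ i) = (\<Sum>i<m. count_list w (a i) * B ^ i) + (\<Sum>i<m. if c = a i then B ^ i else 0)"
  proof -
    have "(\<Sum>i<m. count_list (c # w) (a i) * B ^ i) = (\<Sum>i<m. count_list w (a i) * B ^ i + (if c = a i then B ^ i else 0))"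
      by (intro sum.cong refl) simp
    also have "\<dots> = (\<Sum>i<m. count_list w (a i) * B ^ i) + (\<Sum>i<m. if c = a i then B ^ i else 0)"
      by (rule sum.distrib)
    finally show ?thesis .
  qed
  also have "(\<Sum>i<m. if c = a i then B ^ i else 0) = B ^ idx c" by (rule sum_if_idx[OF c])
  finally show ?case using Cons by simp
qed

lemma len_count: "set w \<subseteq> S \<Longrightarrow> length w = (\<Sum>i<m. count_list w (a i))"
proof (induction w)
  case Nil then show ?case by simp
next
  case (Cons c w)
  have c: "c \<in> S" using Cons.prems by simp
  have "(\<Sum>i<m. count_list (c # w) (a i)) = (\<Sum>i<m. count_list w (a i)) + (\<Sum>i<m. if c = a i then 1 else 0)"
    unfolding count_cons by (simp add: sum.distrib)
  also have "(\<Sum>i<m. if c = a i then 1 else 0) = (1::nat)" using sum_if_idx[OF c, of "\<lambda>_. 1"] by simp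
  finally show ?case using Cons by simp
qed

lemma facts_eq:
  assumes B: "B = (\<Sum>i<m. r i) + 1"
  shows "carlitz_facts S a m r k = {F \<in> Fk k (\<Sum>i<m. r i). wt (concat F) = (\<Sum>i<m. r i * B ^ i)}"
proof (intro set_eqI iffI)
  fix F assume F: "F \<in> carlitz_facts S a m r k"
  have Fd: "length F = k" "\<forall>w\<in>set F. w \<noteq> [] \<and> set w \<subseteq> S \<and> carlitz w"
    "\<forall>i<m. count_list (concat F) (a i) = r i"
    using F unfolding carlitz_facts_def mem_Collect_eq by blast+
  have sub: "set (concat F) \<subseteq> S" using Fd(2) unfolding set_concat by blast
  have "length (concat F) = (\<Sum>i<m. r i)" using len_count[OF sub] Fd(3) by simp
  moreover have "wt (concat F) = (\<Sum>i<m. r i * B ^ i)" using wt_count[OF sub] Fd(3) by simp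
  ultimately show "F \<in> {F \<in> Fk k (\<Sum>i<m. r i). wt (concat F) = (\<Sum>i<m. r i * B ^ i)}"
    using Fd(1,2) unfolding Fk_def mem_Collect_eq by blast
next
  fix F assume F: "F \<in> {F \<in> Fk k (\<Sum>i<m. r i). wt (concat F) = (\<Sum>i<m. r i * B ^ i)}"
  have Fd: "length F = k" "\<forall>w\<in>set F. w \<noteq> [] \<and> set w \<subseteq> S \<and> carlitz w"
    "length (concat F) = (\<Sum>i<m. r i)" "wt (concat F) = (\<Sum>i<m. r i * B ^ i)"
    using F unfolding Fk_def mem_Collect_eq by blast+
  have sub: "set (concat F) \<subseteq> S" using Fd(2) unfolding set_concat by blast
  let ?c = "\<lambda>i. count_list (concat F) (a i)"
  have lenc: "(\<Sum>i<m. ?c i) = (\<Sum>i<m. r i)" using len_count[OF sub] Fd(3) by simp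
  have wtc: "(\<Sum>i<m. ?c i * B ^ i) = (\<Sum>i<m. r i * B ^ i)" using wt_count[OF sub] Fd(4) by simp
  have cl: "\<forall>i<m. ?c i < B"
  proof (intro allI impI)
    fix i assume "i < m"
    then have "?c i \<le> (\<Sum>i<m. ?c i)" by (intro member_le_sum) auto
    then show "?c i < B" using lenc B by simp
  qed
  have rl: "\<forall>i<m. r i < B"
  proof (intro allI impI)
    fix i assume "i < m"
    then have "r i \<le> (\<Sum>i<m. r i)" by (intro member_le_sum) auto
    then show "r i < B" using B by simp
  qed
  have "\<forall>i<m. ?c i = r i" by (rule base_unique[OF cl rl wtc])
  then show "F \<in> carlitz_facts S a m r k" using Fd(1,2) unfolding carlitz_facts_def mem_Collect_eq by blast
qed

end

theorem corollary2p8: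
  fixes a :: "nat \<Rightarrow> 'a" and m :: nat and r :: "nat \<Rightarrow> nat" and x :: real
  assumes "inj_on a {..<m}"
  shows "(\<Prod>i<m. lpoly (r i) x)
       = (\<Sum>k\<le>(\<Sum>i<m. r i). real (card (carlitz_facts (a ` {..<m}) a m r k)) * lpoly k x)"
proof -
  define N where "N = (\<Sum>i<m. r i)"
  define B where "B = N + 1"
  interpret cf a m B using assms by unfold_locales
  define D where "D = (\<Sum>i<m. r i * B ^ i)"
  define r' where "r' = (\<lambda>i. if i < m then r i else 0)"
  have r'v: "r' \<in> vecs m N" by (simp add: vecs_def r'_def N_def)
  have key: "\<And>s. s \<in> vecs m N \<Longrightarrow> (D = (\<Sum>i<m. s i * B ^ i)) = (s = r')"
  proof -
    fix s assume s: "s \<in> vecs m N"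
    have Dr: "D = (\<Sum>i<m. r' i * B ^ i)" by (simp add: D_def r'_def)
    show "(D = (\<Sum>i<m. s i * B ^ i)) = (s = r')"
    proof
      assume eq: "D = (\<Sum>i<m. s i * B ^ i)"
      have sl: "\<forall>i<m. s i < B"
      proof (intro allI impI)
        fix i assume "i < m"
        then have "s i \<le> (\<Sum>i<m. s i)" by (intro member_le_sum) auto
        then show "s i < B" using s by (simp add: vecs_def B_def)
      qed
      have rl: "\<forall>i<m. r' i < B"
      proof (intro allI impI)
        fix i assume "i < m"
        then have "r' i \<le> (\<Sum>i<m. r' i)" by (intro member_le_sum) auto
        then show "r' i < B" using r'v by (simp add: vecs_def B_def)
      qed
      have "(\<Sum>i<m. s i * B ^ i) = (\<Sum>i<m. r' i * B ^ i)" using eq Dr by simp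
      then have "\<forall>i<m. s i = r' i" by (rule base_unique[OF sl rl])
      then show "s = r'" using s by (auto simp: vecs_def r'_def fun_eq_iff)
    next
      assume "s = r'" then show "D = (\<Sum>i<m. s i * B ^ i)" using Dr by simp
    qed
  qed
  have lhs: "((\<Prod>i<m. LL x oo (yv i * fps_X)) $ N) $ D = (\<Prod>i<m. lpoly (r i) x)"
  proof -
    have "((\<Prod>i<m. LL x oo (yv i * fps_X)) $ N) $ D =
        (\<Sum>s\<in>vecs m N. if D = (\<Sum>i<m. s i * B ^ i) then (\<Prod>i<m. lpoly (s i) x) else 0)"
      by (simp add: prod_nth fps_sum_nth, intro sum.cong refl, simp)
    also have "\<dots> = (\<Sum>s\<in>vecs m N. if r' = s then (\<Prod>i<m. lpoly (s i) x) else 0)"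
      by (intro sum.cong refl) (auto simp: key)
    also have "\<dots> = (\<Prod>i<m. lpoly (r' i) x)" using r'v finite_vecs by simp
    also have "\<dots> = (\<Prod>i<m. lpoly (r i) x)" by (simp add: r'_def)
    finally show ?thesis .
  qed
  have rhs: "((LL x oo Cser) $ N) $ D = (\<Sum>k\<le>N. real (card (carlitz_facts S a m r k)) * lpoly k x)"
  proof -
    have "((LL x oo Cser) $ N) $ D = (\<Sum>k=0..N. lpoly k x * ((Cser ^ k $ N) $ D))"
      by (simp add: fps_compose_nth fps_sum_nth LL_nth)
    also have "\<dots> = (\<Sum>k=0..N. lpoly k x * real (card (carlitz_facts S a m r k)))"
    proof (rule sum.cong[OF refl])
      fix k
      have "(Cser ^ k $ N) $ D = (\<Sum>F\<in>Fk k N. if D = wt (concat F) then 1 else 0)"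
        by (simp add: Cser_pow fps_sum_nth)
      also have "\<dots> = real (card {F \<in> Fk k N. wt (concat F) = D})"
        using finite_Fk[of k N] by (simp add: sum.If_cases Int_def conj_commute eq_commute)
      also have "{F \<in> Fk k N. wt (concat F) = D} = carlitz_facts S a m r k"
        using facts_eq[of r k] by (simp add: B_def N_def D_def)
      finally show "lpoly k x * ((Cser ^ k $ N) $ D) = lpoly k x * real (card (carlitz_facts S a m r k))" by simp
    qed
    finally show ?thesis by (simp add: atLeast0AtMost mult.commute)
  qed
  show ?thesis using lhs rhs main_eq[of x] by (simp add: N_def)
qed

end
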